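(* Let $s\in S^{\mathbb{N}}$ be a directive sequence and $u=(u_k)$ a fixed point of $s$. Let $b_n$ be the first letter of $u_n$, and assume $|s_{[0,n)}(b_n)|\to\infty$ as $n\to\infty$. Then for every $a\in A$, $$W_a(u_0)=\bigcup_{n\in\mathbb{N}}\Big\{\sum_{k=0}^nM_{[0,k)}t_k\ \Big|\ b_{n+1}\xrightarrow{t_n,s_n}\cdots\xrightarrow{t_0,s_0}a \text{ is a path in } \mathcal{A}\Big\}.$$
   Context: $A=\{0,\dots,d\}$; $S$ is a finite set of unimodular substitutions on $A$ (morphisms of $A^*$ sending letters to non-empty words, extended to infinite words). $\mathrm{ab}(w)\in\mathbb{Z}^{d+1}$ counts letters of $w$, $\mathrm{ab}(\sigma)$ is the matrix of $\sigma$. For $s=(s_k)$: $M_k=\mathrm{ab}(s_k)$, $M_{[0,k)}=M_0\cdots M_{k-1}$ ($M_{[0,0)}=\mathrm{Id}$), $s_{[0,n)}=s_0\circ\cdots\circ s_{n-1}$. A fixed point of $s$ is $(u_k)$ with $s_k(u_{k+1})=u_k$ for all $k$. $W_a(w)=\{\mathrm{ab}(p):pa\text{ prefix of }w\}$. Abelianized prefix automaton $\mathcal{A}$: states $A$, transitions $c\xrightarrow{t,\sigma}e$ ($\sigma\in S$) iff $\sigma(c)=peq$ for words $p,q$ with $\mathrm{ab}(p)=t$; a path $c_{n+1}\xrightarrow{t_n,s_n}\cdots\xrightarrow{t_0,s_0}c_0$ means $c_{k+1}\xrightarrow{t_k,s_k}c_k$ are transitions for all $0\le k\le n$. *)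

theory Defs
  imports "HOL-Analysis.Analysis"
begin

text \<open>The alphabet A is modelled by an arbitrary finite type 'a (so A = {0..d} with d+1 = CARD('a)).\<close>

type_synonym 'a subst = "'a \<Rightarrow> 'a list"

definition is_subst :: "'a subst \<Rightarrow> bool" where
  "is_subst \<sigma> \<longleftrightarrow> (\<forall>c. \<sigma> c \<noteq> [])"

definition ab :: "'a::finite list \<Rightarrow> int ^ 'a" where
  "ab w = (\<chi> i. int (count_list w i))"

definition ab_mat :: "'a::finite subst \<Rightarrow> int ^ 'a ^ 'a" where
  "ab_mat \<sigma> = (\<chi> i j. int (count_list (\<sigma> j) i))"

definition unimodular :: "'a::finite subst \<Rightarrow> bool" where
  "unimodular \<sigma> \<longleftrightarrow> det (ab_mat \<sigma>) = 1 \<or> det (ab_mat \<sigma>) = -1"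

definition subst_word :: "'a subst \<Rightarrow> 'a list \<Rightarrow> 'a list" where
  "subst_word \<sigma> w = concat (map \<sigma> w)"

definition pref :: "(nat \<Rightarrow> 'a) \<Rightarrow> nat \<Rightarrow> 'a list" where
  "pref x n = map x [0..<n]"

text \<open>Image of an infinite word (for substitutions with non-empty images).\<close>
definition subst_inf :: "'a subst \<Rightarrow> (nat \<Rightarrow> 'a) \<Rightarrow> (nat \<Rightarrow> 'a)" where
  "subst_inf \<sigma> x = (\<lambda>i. subst_word \<sigma> (pref x (Suc i)) ! i)"

text \<open>s_[0,n) = s_0 o ... o s_(n-1), acting on finite words.\<close>
fun subst_prefix :: "(nat \<Rightarrow> 'a subst) \<Rightarrow> nat \<Rightarrow> 'a list \<Rightarrow> 'a list" where
  "subst_prefix s 0 w = w"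
| "subst_prefix s (Suc n) w = subst_prefix s n (subst_word (s n) w)"

fun mat_prefix :: "(nat \<Rightarrow> 'a::finite subst) \<Rightarrow> nat \<Rightarrow> int ^ 'a ^ 'a" where
  "mat_prefix s 0 = mat 1"
| "mat_prefix s (Suc k) = mat_prefix s k ** ab_mat (s k)"

definition is_fixed_point :: "(nat \<Rightarrow> 'a subst) \<Rightarrow> (nat \<Rightarrow> nat \<Rightarrow> 'a) \<Rightarrow> bool" where
  "is_fixed_point s u \<longleftrightarrow> (\<forall>k. subst_inf (s k) (u (Suc k)) = u k)"

definition W :: "'a::finite \<Rightarrow> (nat \<Rightarrow> 'a) \<Rightarrow> (int ^ 'a) set" where
  "W a w = {ab (pref w n) | n. w n = a}"

definition trans_ap :: "'a::finite subst set \<Rightarrow> 'a \<Rightarrow> int ^ 'a \<Rightarrow> 'a subst \<Rightarrow> 'a \<Rightarrow> bool" where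
  "trans_ap S c t \<sigma> e \<longleftrightarrow> \<sigma> \<in> S \<and> (\<exists>p q. \<sigma> c = p @ e # q \<and> ab p = t)"

definition is_path :: "'a::finite subst set \<Rightarrow> nat \<Rightarrow> 'a \<Rightarrow> (nat \<Rightarrow> int ^ 'a) \<Rightarrow> (nat \<Rightarrow> 'a subst) \<Rightarrow> 'a \<Rightarrow> bool" where
  "is_path S n b t s a \<longleftrightarrow> (\<exists>c. c (Suc n) = b \<and> c 0 = a \<and>
      (\<forall>k\<le>n. trans_ap S (c (Suc k)) (t k) (s k) (c k)))"

end

theory Submission
  imports Defs
begin

definition pfx :: "'a list \<Rightarrow> (nat \<Rightarrow> 'a) \<Rightarrow> bool" where
  "pfx w x \<longleftrightarrow> (\<forall>i<length w. x i = w ! i)"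

lemma subst_word_append[simp]: "subst_word \<sigma> (x @ y) = subst_word \<sigma> x @ subst_word \<sigma> y"
  by (simp add: subst_word_def)

lemma subst_word_Cons[simp]: "subst_word \<sigma> (c # y) = \<sigma> c @ subst_word \<sigma> y"
  by (simp add: subst_word_def)

lemma subst_word_Nil[simp]: "subst_word \<sigma> [] = []"
  by (simp add: subst_word_def)

lemma subst_word_len: "\<forall>c. \<sigma> c \<noteq> [] \<Longrightarrow> length w \<le> length (subst_word \<sigma> w)"
proof (induction w)
  case Nil then show ?case by simp
next
  case (Cons c w)
  have "length (\<sigma> c) \<ge> 1" using Cons.prems by (metis One_nat_def Suc_leI length_greater_0_conv)
  then show ?case using Cons by simp
qed

lemma pref_pfx: "pfx w x \<Longrightarrow> pref x (length w) = w"
  unfolding pfx_def pref_def by (intro nth_equalityI) auto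

lemma pref_add: "pref x (m + k) = pref x m @ map (\<lambda>j. x j) [m..<m+k]"
  unfolding pref_def using upt_add_eq_append[of 0 m k] by simp

lemma lemA:
  assumes "pfx w x" "\<forall>c. \<sigma> c \<noteq> []"
  shows "pfx (subst_word \<sigma> w) (subst_inf \<sigma> x)"
  unfolding pfx_def
proof (intro allI impI)
  fix i assume i: "i < length (subst_word \<sigma> w)"
  have L: "Suc i \<le> length (subst_word \<sigma> (pref x (Suc i)))"
    using subst_word_len[OF assms(2), of "pref x (Suc i)"] by (simp add: pref_def)
  show "subst_inf \<sigma> x i = subst_word \<sigma> w ! i"
  proof (cases "Suc i \<le> length w")
    case True
    have "w = pref x (Suc i) @ drop (Suc i) w"
    proof -
      have "pref x (length w) = w" using pref_pfx[OF assms(1)] .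
      moreover have "pref x (length w) = pref x (Suc i) @ map x [Suc i..<length w]"
        using pref_add[of x "Suc i" "length w - Suc i"] True by (simp only: le_add_diff_inverse)
      ultimately have "w = pref x (Suc i) @ map x [Suc i..<length w]" by simp
      moreover have "length (pref x (Suc i)) = Suc i" by (simp add: pref_def)
      ultimately show ?thesis by (metis append_eq_conv_conj)
    qed
    then have "subst_word \<sigma> w = subst_word \<sigma> (pref x (Suc i)) @ subst_word \<sigma> (drop (Suc i) w)"
      by (metis subst_word_append)
    then show ?thesis using L unfolding subst_inf_def by (simp add: nth_append)
  next
    case False
    have "pref x (Suc i) = pref x (length w) @ map x [length w..<Suc i]"
      using pref_add[of x "length w" "Suc i - length w"] False by simp
    then have "pref x (Suc i) = w @ map x [length w..<Suc i]"
      using pref_pfx[OF assms(1)] by simp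
    then show ?thesis using i unfolding subst_inf_def by (simp add: nth_append)
  qed
qed

lemma subst_prefix_append: "subst_prefix s n (x @ y) = subst_prefix s n x @ subst_prefix s n y"
  by (induction n arbitrary: x y) auto

lemma subst_prefix_Cons: "subst_prefix s n (c # y) = subst_prefix s n [c] @ subst_prefix s n y"
  using subst_prefix_append[of s n "[c]" y] by simp

lemma subst_prefix_single_Suc: "subst_prefix s (Suc n) [b] = subst_prefix s n (s n b)"
  by simp

lemma lemB:
  assumes fp: "is_fixed_point s u" and ne: "\<forall>k c. s k c \<noteq> []"
  shows "pfx w (u n) \<Longrightarrow> pfx (subst_prefix s n w) (u 0)"
proof (induction n arbitrary: w)
  case 0 then show ?case by simp
next
  case (Suc n)
  have "pfx (subst_word (s n) w) (subst_inf (s n) (u (Suc n)))"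
    using lemA[OF Suc.prems] ne by blast
  then have "pfx (subst_word (s n) w) (u n)" using fp unfolding is_fixed_point_def by simp
  then show ?case using Suc.IH by simp
qed

lemma ab_append: "ab (x @ y) = ab x + ab y"
  unfolding ab_def by (simp add: vec_eq_iff)

lemma ab_Nil[simp]: "ab [] = 0"
  by (simp add: ab_def vec_eq_iff)

lemma ab_single: "ab [c] $ j = (if c = j then 1 else 0)"
  by (simp add: ab_def)

lemma ab_single_mult: "ab_mat \<sigma> *v ab [c] = ab (\<sigma> c)"
proof -
  have "(ab_mat \<sigma> *v ab [c]) $ i = ab (\<sigma> c) $ i" for i
  proof -
    have "(ab_mat \<sigma> *v ab [c]) $ i = (\<Sum>j\<in>UNIV. int (count_list (\<sigma> j) i) * (if c = j then 1 else 0))"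
      unfolding matrix_vector_mult_def ab_single by (simp add: ab_mat_def)
    also have "\<dots> = int (count_list (\<sigma> c) i)"
      by (simp add: if_distrib cong: if_cong)
    finally show ?thesis unfolding ab_def by simp
  qed
  then show ?thesis by (simp add: vec_eq_iff)
qed

lemma ab_subst_word: "ab (subst_word \<sigma> w) = ab_mat \<sigma> *v ab w"
proof (induction w)
  case Nil then show ?case by simp
next
  case (Cons c w)
  have "ab (c # w) = ab [c] + ab w" using ab_append[of "[c]" w] by simp
  then show ?case using Cons ab_single_mult[of \<sigma> c]
    by (simp add: ab_append matrix_vector_right_distrib)
qed

lemma ab_subst_prefix: "ab (subst_prefix s n w) = mat_prefix s n *v ab w"
  by (induction n arbitrary: w) (auto simp: ab_subst_word matrix_vector_mul_assoc)

definition path' :: "'a::finite subst set \<Rightarrow> (nat \<Rightarrow> 'a subst) \<Rightarrow> nat \<Rightarrow> 'a \<Rightarrow> (nat \<Rightarrow> int ^ 'a) \<Rightarrow> 'a \<Rightarrow> bool" where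
  "path' S s n b t a \<longleftrightarrow> (\<exists>c. c n = b \<and> c 0 = a \<and> (\<forall>k<n. trans_ap S (c (Suc k)) (t k) (s k) (c k)))"

lemma path'_0: "path' S s 0 b t a \<longleftrightarrow> b = a"
  unfolding path'_def by auto

lemma path'_Suc: "path' S s (Suc n) b t a \<longleftrightarrow> (\<exists>c'. trans_ap S b (t n) (s n) c' \<and> path' S s n c' t a)"
proof
  assume "path' S s (Suc n) b t a"
  then obtain c where c: "c (Suc n) = b" "c 0 = a" "\<forall>k<Suc n. trans_ap S (c (Suc k)) (t k) (s k) (c k)"
    unfolding path'_def by blast
  then show "\<exists>c'. trans_ap S b (t n) (s n) c' \<and> path' S s n c' t a"
    unfolding path'_def by (intro exI[of _ "c n"]) (auto intro!: exI[of _ c])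
next
  assume "\<exists>c'. trans_ap S b (t n) (s n) c' \<and> path' S s n c' t a"
  then obtain c' c where h: "trans_ap S b (t n) (s n) c'" "c n = c'" "c 0 = a"
    "\<forall>k<n. trans_ap S (c (Suc k)) (t k) (s k) (c k)"
    unfolding path'_def by blast
  show "path' S s (Suc n) b t a" unfolding path'_def
    apply (rule exI[of _ "c(Suc n := b)"])
    using h by (auto simp: less_Suc_eq)
qed

lemma concat_split:
  "concat (map f w) = p @ a # q \<Longrightarrow>
   \<exists>w1 c w2 p' q'. w = w1 @ c # w2 \<and> f c = p' @ a # q' \<and> p = concat (map f w1) @ p'"
proof (induction w arbitrary: p)
  case Nil then show ?case by simp
next
  case (Cons c w)
  from Cons.prems have eq: "f c @ concat (map f w) = p @ a # q" by simp
  then obtain us where us: "(f c = p @ us \<and> us @ concat (map f w) = a # q) \<or>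
      (f c @ us = p \<and> concat (map f w) = us @ a # q)"
    by (auto simp: append_eq_append_conv2)
  then show ?case
  proof
    assume h: "f c = p @ us \<and> us @ concat (map f w) = a # q"
    show ?thesis
    proof (cases us)
      case Nil
      then have "concat (map f w) = [] @ a # q" "p = f c" using h by auto
      from Cons.IH[OF this(1)] obtain w1 c' w2 p' q' where
        "w = w1 @ c' # w2" "f c' = p' @ a # q'" "[] = concat (map f w1) @ p'" by blast
      then show ?thesis using \<open>p = f c\<close>
        by (intro exI[of _ "c # w1"] exI[of _ c'] exI[of _ w2] exI[of _ p'] exI[of _ q']) auto
    next
      case (Cons x us')
      then have "f c = p @ a # us'" using h by auto
      then show ?thesis by (intro exI[of _ "[]"] exI[of _ c] exI[of _ w] exI[of _ p] exI[of _ us']) auto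
    qed
  next
    assume h: "f c @ us = p \<and> concat (map f w) = us @ a # q"
    from Cons.IH[of us] h obtain w1 c' w2 p' q' where
      "w = w1 @ c' # w2" "f c' = p' @ a # q'" "us = concat (map f w1) @ p'" by blast
    then show ?thesis using h
      by (intro exI[of _ "c # w1"] exI[of _ c'] exI[of _ w2] exI[of _ p'] exI[of _ q']) auto
  qed
qed

lemma subst_word_concat: "subst_word \<sigma> w = concat (map \<sigma> w)"
  by (simp add: subst_word_def)

lemma subst_prefix_concat: "subst_prefix s n w = concat (map (\<lambda>c. subst_prefix s n [c]) w)"
proof (induction w)
  case Nil then show ?case by (induction n) auto
next
  case (Cons c w) then show ?case using subst_prefix_Cons[of s n c w] by simp
qed

lemma lemD:
  assumes S: "\<forall>k. s k \<in> S"
  shows "subst_prefix s n [b] = p @ a # q \<Longrightarrow>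
    \<exists>t. path' S s n b t a \<and> ab p = (\<Sum>k<n. mat_prefix s k *v t k)"
proof (induction n arbitrary: b p q)
  case 0
  then have "p = []" "b = a" by (auto simp: Cons_eq_append_conv)
  then show ?case by (auto simp: path'_0)
next
  case (Suc n)
  have "concat (map (\<lambda>c. subst_prefix s n [c]) (s n b)) = p @ a # q"
    using Suc.prems subst_prefix_concat[of s n "s n b"] by simp
  from concat_split[OF this] obtain w1 c w2 p' q' where
    w: "s n b = w1 @ c # w2" "subst_prefix s n [c] = p' @ a # q'"
    "p = concat (map (\<lambda>c. subst_prefix s n [c]) w1) @ p'" by blast
  have pp: "p = subst_prefix s n w1 @ p'" using w(3) subst_prefix_concat[of s n w1] by simp
  from Suc.IH[OF w(2)] obtain t where t: "path' S s n c t a" "ab p' = (\<Sum>k<n. mat_prefix s k *v t k)"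
    by blast
  define t' where "t' = t(n := ab w1)"
  have pt: "path' S s n c t' a" using t(1) unfolding path'_def t'_def by auto
  have tr: "trans_ap S b (t' n) (s n) c" using S w(1) unfolding trans_ap_def t'_def by auto
  have sum: "(\<Sum>k<n. mat_prefix s k *v t' k) = (\<Sum>k<n. mat_prefix s k *v t k)"
    unfolding t'_def by (intro sum.cong) auto
  have "ab p = mat_prefix s n *v t' n + (\<Sum>k<n. mat_prefix s k *v t' k)"
    using pp t(2) sum by (simp add: ab_append ab_subst_prefix t'_def)
  then have "ab p = (\<Sum>k<Suc n. mat_prefix s k *v t' k)" by (simp add: add.commute)
  then show ?case using pt tr path'_Suc by blast
qed

lemma lemC:
  shows "path' S s n b t a \<Longrightarrow>
    \<exists>p q. subst_prefix s n [b] = p @ a # q \<and> ab p = (\<Sum>k<n. mat_prefix s k *v t k)"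
proof (induction n arbitrary: b)
  case 0
  then show ?case by (auto simp: path'_0 intro!: exI[of _ "[]"])
next
  case (Suc n)
  then obtain c where c: "trans_ap S b (t n) (s n) c" "path' S s n c t a" using path'_Suc by metis
  from c(1) obtain p1 q1 where pq: "s n b = p1 @ c # q1" "ab p1 = t n" unfolding trans_ap_def by blast
  from Suc.IH[OF c(2)] obtain p q where h: "subst_prefix s n [c] = p @ a # q"
    "ab p = (\<Sum>k<n. mat_prefix s k *v t k)" by blast
  have "subst_prefix s (Suc n) [b] = (subst_prefix s n p1 @ p) @ a # (q @ subst_prefix s n q1)"
    using pq(1) h(1) by (simp add: subst_prefix_append subst_prefix_Cons[of s n c q1])
  moreover have "ab (subst_prefix s n p1 @ p) = (\<Sum>k<Suc n. mat_prefix s k *v t k)"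
    using pq(2) h(2) by (simp add: ab_append ab_subst_prefix add.commute)
  ultimately show ?case by blast
qed

lemma is_path_eq: "is_path S n b t s a = path' S s (Suc n) b t a"
  unfolding is_path_def path'_def by (simp add: less_Suc_eq_le)

theorem lemma3p22:
  fixes S :: "'a::finite subst set"
    and s :: "nat \<Rightarrow> 'a subst"
    and u :: "nat \<Rightarrow> nat \<Rightarrow> 'a"
    and a :: 'a
  assumes "finite S"
    and "\<forall>\<sigma>\<in>S. is_subst \<sigma> \<and> unimodular \<sigma>"
    and "\<forall>k. s k \<in> S"
    and "is_fixed_point s u"
    and "filterlim (\<lambda>n. length (subst_prefix s n [u n 0])) at_top sequentially"
  shows "W a (u 0) = (\<Union>n. {\<Sum>k\<le>n. mat_prefix s k *v t k | t. is_path S n (u (Suc n) 0) t s a})"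
proof -
  have ne: "\<forall>k c. s k c \<noteq> []" using assms(2,3) unfolding is_subst_def by blast
  have pf: "pfx (subst_prefix s n [u n 0]) (u 0)" for n
    by (rule lemB[OF assms(4) ne]) (simp add: pfx_def)
  have sumeq: "(\<Sum>k\<le>n. f k) = (\<Sum>k<Suc n. f k)" for n and f :: "nat \<Rightarrow> int ^ 'a"
    by (simp add: lessThan_Suc_atMost)
  show ?thesis
  proof
    show "W a (u 0) \<subseteq> (\<Union>n. {\<Sum>k\<le>n. mat_prefix s k *v t k | t. is_path S n (u (Suc n) 0) t s a})"
    proof
      fix x assume "x \<in> W a (u 0)"
      then obtain m where m: "x = ab (pref (u 0) m)" "u 0 m = a" unfolding W_def by blast
      have "\<forall>\<^sub>F n in sequentially. Suc m \<le> length (subst_prefix s n [u n 0])"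
        using assms(5) by (simp add: filterlim_at_top)
      then obtain N where N: "\<And>n. n \<ge> N \<Longrightarrow> Suc m \<le> length (subst_prefix s n [u n 0])"
        unfolding eventually_sequentially by blast
      define w where "w = subst_prefix s (Suc N) [u (Suc N) 0]"
      have lw: "m < length w" using N[of "Suc N"] unfolding w_def by simp
      have pw: "pfx w (u 0)" unfolding w_def by (rule pf)
      have "take m w = pref (u 0) m"
        using pw lw unfolding pfx_def pref_def by (intro nth_equalityI) auto
      moreover have "w ! m = a" using pw lw m(2) unfolding pfx_def by auto
      ultimately have "w = pref (u 0) m @ a # drop (Suc m) w"
        using lw by (metis Cons_nth_drop_Suc append_take_drop_id)
      from lemD[OF assms(3) this[unfolded w_def]] obtain t where
        "path' S s (Suc N) (u (Suc N) 0) t a" "ab (pref (u 0) m) = (\<Sum>k<Suc N. mat_prefix s k *v t k)"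
        by blast
      then show "x \<in> (\<Union>n. {\<Sum>k\<le>n. mat_prefix s k *v t k | t. is_path S n (u (Suc n) 0) t s a})"
        using m(1) by (auto simp: is_path_eq sumeq)
    qed
  next
    show "(\<Union>n. {\<Sum>k\<le>n. mat_prefix s k *v t k | t. is_path S n (u (Suc n) 0) t s a}) \<subseteq> W a (u 0)"
    proof
      fix x assume "x \<in> (\<Union>n. {\<Sum>k\<le>n. mat_prefix s k *v t k | t. is_path S n (u (Suc n) 0) t s a})"
      then obtain n t where h: "x = (\<Sum>k<Suc n. mat_prefix s k *v t k)" "path' S s (Suc n) (u (Suc n) 0) t a"
        by (auto simp: is_path_eq sumeq)
      from lemC[OF h(2)] obtain p q where pq: "subst_prefix s (Suc n) [u (Suc n) 0] = p @ a # q"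
        "ab p = (\<Sum>k<Suc n. mat_prefix s k *v t k)" by blast
      have pw: "pfx (p @ a # q) (u 0)" using pf[of "Suc n"] pq(1) by simp
      have "pfx p (u 0)" using pw unfolding pfx_def by (auto simp: nth_append)
      then have "pref (u 0) (length p) = p" by (rule pref_pfx)
      moreover have "u 0 (length p) = a" using pw unfolding pfx_def by auto
      ultimately have "x = ab (pref (u 0) (length p)) \<and> u 0 (length p) = a" using h(1) pq(2) by simp
      then show "x \<in> W a (u 0)" unfolding W_def by blast
    qed
  qed
qed

end
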